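(* For every rpoNFA $\mathcal{A}$, the language $L(\mathcal{A})$ is DRE definable, i.e., there exists a deterministic regular expression $r$ with $L(r)=L(\mathcal{A})$.
   Context: A poNFA is an NFA whose reachability relation ($p\le q$ iff $q\in p\cdot w$ for some word $w$) is a partial order; an rpoNFA is a poNFA such that for every state $q$ and letter $a$, $q\in q\cdot a$ implies $q\cdot a=\{q\}$. Regular expressions over $\Sigma$ are built from $\emptyset$, $\varepsilon$, letters $a\in\Sigma$ by concatenation, union $+$ and Kleene star, with the usual semantics. For a regular expression $r$, let $\overline{r}$ be obtained by replacing the $i$-th occurrence of each letter $a$ in $r$ by a fresh marked letter $a_i$. The expression $r$ is deterministic (one-unambiguous) if there are no words $wa_iv$ and $wa_jv'$ in $L(\overline{r})$ with $i\neq j$. A regular language is DRE definable if some deterministic regular expression defines it. *)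

theory Defs
  imports Main
begin

datatype 'a rexp = Zero | One | Atom 'a | Times "'a rexp" "'a rexp" | Plus "'a rexp" "'a rexp" | Star "'a rexp"

definition conc :: "'a list set \<Rightarrow> 'a list set \<Rightarrow> 'a list set" where
  "conc A B = {u @ v | u v. u \<in> A \<and> v \<in> B}"

inductive_set star_lang :: "'a list set \<Rightarrow> 'a list set" for A where
  star_Nil: "[] \<in> star_lang A"
| star_app: "u \<in> A \<Longrightarrow> v \<in> star_lang A \<Longrightarrow> u @ v \<in> star_lang A"

fun lang :: "'a rexp \<Rightarrow> 'a list set" where
  "lang Zero = {}"
| "lang One = {[]}"
| "lang (Atom a) = {[a]}"
| "lang (Times r s) = conc (lang r) (lang s)"
| "lang (Plus r s) = lang r \<union> lang s"
| "lang (Star r) = star_lang (lang r)"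

fun atoms :: "'a rexp \<Rightarrow> 'a set" where
  "atoms Zero = {}"
| "atoms One = {}"
| "atoms (Atom a) = {a}"
| "atoms (Times r s) = atoms r \<union> atoms s"
| "atoms (Plus r s) = atoms r \<union> atoms s"
| "atoms (Star r) = atoms r"

text \<open>Marking: the i-th occurrence (from the left, counting from 1) of letter a
  becomes the marked letter (a, i). The counter c records how many occurrences
  of each letter have been seen so far.\<close>
fun mark_aux :: "('a \<Rightarrow> nat) \<Rightarrow> 'a rexp \<Rightarrow> ('a \<times> nat) rexp \<times> ('a \<Rightarrow> nat)" where
  "mark_aux c Zero = (Zero, c)"
| "mark_aux c One = (One, c)"
| "mark_aux c (Atom a) = (Atom (a, Suc (c a)), c(a := Suc (c a)))"
| "mark_aux c (Times r s) =
     (let (r', c1) = mark_aux c r; (s', c2) = mark_aux c1 s in (Times r' s', c2))"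
| "mark_aux c (Plus r s) =
     (let (r', c1) = mark_aux c r; (s', c2) = mark_aux c1 s in (Plus r' s', c2))"
| "mark_aux c (Star r) = (let (r', c1) = mark_aux c r in (Star r', c1))"

definition mark :: "'a rexp \<Rightarrow> ('a \<times> nat) rexp" where
  "mark r = fst (mark_aux (\<lambda>_. 0) r)"

definition deterministic :: "'a rexp \<Rightarrow> bool" where
  "deterministic r \<longleftrightarrow>
     \<not> (\<exists>w a i j v v'. w @ [(a, i)] @ v \<in> lang (mark r) \<and>
                        w @ [(a, j)] @ v' \<in> lang (mark r) \<and> i \<noteq> j)"

definition DRE_definable :: "'a set \<Rightarrow> 'a list set \<Rightarrow> bool" where
  "DRE_definable \<Sigma> L \<longleftrightarrow> (\<exists>r. atoms r \<subseteq> \<Sigma> \<and> deterministic r \<and> lang r = L)"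

record ('q, 'a) nfa =
  states :: "'q set"
  alph :: "'a set"
  trans :: "'q \<Rightarrow> 'a \<Rightarrow> 'q set"
  init :: "'q set"
  final :: "'q set"

definition is_nfa :: "('q, 'a) nfa \<Rightarrow> bool" where
  "is_nfa A \<longleftrightarrow> finite (states A) \<and> finite (alph A) \<and>
     init A \<subseteq> states A \<and> final A \<subseteq> states A \<and>
     (\<forall>q \<in> states A. \<forall>a \<in> alph A. trans A q a \<subseteq> states A)"

fun steps :: "('q, 'a) nfa \<Rightarrow> 'q set \<Rightarrow> 'a list \<Rightarrow> 'q set" where
  "steps A S [] = S"
| "steps A S (a # w) = steps A (\<Union>q\<in>S. trans A q a) w"

definition nfa_lang :: "('q, 'a) nfa \<Rightarrow> 'a list set" where
  "nfa_lang A = {w \<in> lists (alph A). steps A (init A) w \<inter> final A \<noteq> {}}"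

definition reach :: "('q, 'a) nfa \<Rightarrow> 'q \<Rightarrow> 'q \<Rightarrow> bool" where
  "reach A p q \<longleftrightarrow> (\<exists>w \<in> lists (alph A). q \<in> steps A {p} w)"

definition poNFA :: "('q, 'a) nfa \<Rightarrow> bool" where
  "poNFA A \<longleftrightarrow> is_nfa A \<and>
     (\<forall>p \<in> states A. reach A p p) \<and>
     (\<forall>p \<in> states A. \<forall>q \<in> states A. \<forall>r \<in> states A. reach A p q \<and> reach A q r \<longrightarrow> reach A p r) \<and>
     (\<forall>p \<in> states A. \<forall>q \<in> states A. reach A p q \<and> reach A q p \<longrightarrow> p = q)"

definition rpoNFA :: "('q, 'a) nfa \<Rightarrow> bool" where
  "rpoNFA A \<longleftrightarrow> poNFA A \<and>
     (\<forall>q \<in> states A. \<forall>a \<in> alph A. q \<in> trans A q a \<longrightarrow> trans A q a = {q})"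

end

theory Submission
  imports Defs
begin

definition detL :: "('a \<times> nat) list set \<Rightarrow> bool" where
  "detL L \<longleftrightarrow> \<not> (\<exists>w a i j v v'. w @ [(a, i)] @ v \<in> L \<and> w @ [(a, j)] @ v' \<in> L \<and> i \<noteq> j)"

lemma mark_Times: "mark_aux c (Times r s) =
  (Times (fst (mark_aux c r)) (fst (mark_aux (snd (mark_aux c r)) s)), snd (mark_aux (snd (mark_aux c r)) s))"
  by (simp add: split_def Let_def)

lemma mark_Plus: "mark_aux c (Plus r s) =
  (Plus (fst (mark_aux c r)) (fst (mark_aux (snd (mark_aux c r)) s)), snd (mark_aux (snd (mark_aux c r)) s))"
  by (simp add: split_def Let_def)

lemma mark_Star: "mark_aux c (Star r) = (Star (fst (mark_aux c r)), snd (mark_aux c r))"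
  by (simp add: split_def Let_def)

declare mark_aux.simps(4,5,6)[simp del]
declare mark_Times[simp] mark_Plus[simp] mark_Star[simp]

lemma conc_iff: "x \<in> conc A B \<longleftrightarrow> (\<exists>u v. x = u@v \<and> u\<in>A \<and> v\<in>B)"
  by (auto simp: conc_def)

lemma map_fst_mark: "w \<in> lang (fst (mark_aux c r)) \<Longrightarrow> map fst w \<in> lang r"
proof (induction r arbitrary: c w)
  case (Times r s)
  then show ?case by (fastforce simp: conc_iff)
next
  case (Star r)
  have "u \<in> star_lang (lang (fst (mark_aux c r))) \<Longrightarrow> map fst u \<in> star_lang (lang r)" for u
    by (induction rule: star_lang.induct) (auto intro: star_lang.intros Star.IH)
  with Star.prems show ?case by simp
qed auto

fun plus_list :: "'a rexp list \<Rightarrow> 'a rexp" where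
  "plus_list [] = Zero"
| "plus_list (r#rs) = Plus r (plus_list rs)"

lemma lang_plus_list: "lang (plus_list rs) = (\<Union>r\<in>set rs. lang r)"
  by (induction rs) auto

lemma atoms_plus_list: "atoms (plus_list rs) = (\<Union>r\<in>set rs. atoms r)"
  by (induction rs) auto

lemma funct_atoms:
  "distinct bs \<Longrightarrow> [(b,i)] \<in> lang (fst (mark_aux c (plus_list (map Atom bs))))
   \<Longrightarrow> [(b,j)] \<in> lang (fst (mark_aux c (plus_list (map Atom bs)))) \<Longrightarrow> i = j"
proof (induction bs arbitrary: c)
  case Nil
  then show ?case by simp
next
  case (Cons b' bs)
  have notin: "[(b',k)] \<notin> lang (fst (mark_aux c' (plus_list (map Atom bs))))" for k c'
  proof
    assume "[(b',k)] \<in> lang (fst (mark_aux c' (plus_list (map Atom bs))))"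
    from map_fst_mark[OF this] have "[b'] \<in> lang (plus_list (map Atom bs))" by simp
    then have "b' \<in> set bs" by (auto simp: lang_plus_list)
    with Cons.prems(1) show False by simp
  qed
  show ?case
  proof (cases "b = b'")
    case True
    with Cons.prems notin show ?thesis by auto
  next
    case False
    with Cons.prems Cons.IH show ?thesis by auto
  qed
qed

lemma atoms_single: "w \<in> lang (fst (mark_aux c (plus_list (map Atom bs)))) \<Longrightarrow> \<exists>p. w = [p] \<and> fst p \<in> set bs"
proof -
  assume "w \<in> lang (fst (mark_aux c (plus_list (map Atom bs))))"
  from map_fst_mark[OF this] have "map fst w \<in> lang (plus_list (map Atom bs))" .
  then show ?thesis by (cases w) (auto simp: lang_plus_list)
qed

lemma alt_first:
  "w \<in> lang (fst (mark_aux c (plus_list (map (\<lambda>a. Times (Atom a) (g a)) as)))) \<Longrightarrow>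
   \<exists>p w'. w = p # w' \<and> fst p \<in> set as"
proof -
  assume "w \<in> lang (fst (mark_aux c (plus_list (map (\<lambda>a. Times (Atom a) (g a)) as))))"
  from map_fst_mark[OF this] have "map fst w \<in> lang (plus_list (map (\<lambda>a. Times (Atom a) (g a)) as))" .
  then show ?thesis by (cases w) (auto simp: lang_plus_list conc_iff)
qed

lemma alt_prop:
  assumes "distinct as" "\<forall>a c. detL (lang (fst (mark_aux c (g a))))"
  shows "(a,i)#x \<in> lang (fst (mark_aux c (plus_list (map (\<lambda>a. Times (Atom a) (g a)) as)))) \<Longrightarrow>
     (a,j)#y \<in> lang (fst (mark_aux c (plus_list (map (\<lambda>a. Times (Atom a) (g a)) as)))) \<Longrightarrow>
     i = j \<and> (\<exists>L'. detL L' \<and> x \<in> L' \<and> y \<in> L')"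
  using assms(1)
proof (induction as arbitrary: c)
  case Nil
  then show ?case by simp
next
  case (Cons b bs)
  let ?R = "\<lambda>c'. lang (fst (mark_aux c' (plus_list (map (\<lambda>a. Times (Atom a) (g a)) bs))))"
  have notin: "(b,k)#z \<notin> ?R c'" for k z c'
  proof
    assume "(b,k)#z \<in> ?R c'"
    from alt_first[OF this] have "b \<in> set bs" by auto
    with Cons.prems(3) show False by simp
  qed
  show ?case
  proof (cases "a = b")
    case True
    with Cons.prems notin have "x \<in> lang (fst (mark_aux (c(b := Suc (c b))) (g b)))"
      "y \<in> lang (fst (mark_aux (c(b := Suc (c b))) (g b)))" "i = j"
      by (auto simp: conc_iff)
    with assms(2) show ?thesis by blast
  next
    case False
    have nb: "(a,k)#z \<notin> lang (fst (mark_aux c (Times (Atom b) (g b))))" for k z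
      using False by (auto simp: conc_iff)
    from Cons.prems nb have "(a,i)#x \<in> ?R (snd (mark_aux c (Times (Atom b) (g b))))"
       "(a,j)#y \<in> ?R (snd (mark_aux c (Times (Atom b) (g b))))"
      by (auto simp del: mark_Times)
    with Cons.IH Cons.prems(3) show ?thesis by auto
  qed
qed

lemma star_conc_cases:
  assumes "x \<in> conc (star_lang LB) R" "\<forall>w\<in>LB. \<exists>p. w = [p]"
  shows "x \<in> R \<or> (\<exists>p x'. x = p#x' \<and> [p] \<in> LB \<and> x' \<in> conc (star_lang LB) R)"
proof -
  from assms(1) obtain u v where uv: "x = u@v" "u \<in> star_lang LB" "v \<in> R" by (auto simp: conc_iff)
  from uv(2) show ?thesis
  proof cases
    case star_Nil
    then show ?thesis using uv by simp
  next
    case (star_app u1 u2)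
    with assms(2) obtain p where "u1 = [p]" by auto
    with star_app uv show ?thesis by (auto simp: conc_iff)
  qed
qed

lemma star_conc_iff:
  assumes "\<forall>w\<in>LB. \<exists>p. w = [p]"
  shows "x \<in> conc (star_lang LB) R \<longleftrightarrow> x \<in> R \<or> (\<exists>p x'. x = p#x' \<and> [p] \<in> LB \<and> x' \<in> conc (star_lang LB) R)"
proof
  assume "x \<in> conc (star_lang LB) R" then show "x \<in> R \<or> (\<exists>p x'. x = p#x' \<and> [p] \<in> LB \<and> x' \<in> conc (star_lang LB) R)"
    using star_conc_cases assms by blast
next
  assume "x \<in> R \<or> (\<exists>p x'. x = p#x' \<and> [p] \<in> LB \<and> x' \<in> conc (star_lang LB) R)"
  then show "x \<in> conc (star_lang LB) R"
  proof
    assume "x \<in> R" then show ?thesis by (force simp: conc_iff intro: star_lang.intros)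
  next
    assume "\<exists>p x'. x = p#x' \<and> [p] \<in> LB \<and> x' \<in> conc (star_lang LB) R"
    then obtain p x' u v where "x = p#x'" "[p] \<in> LB" "x' = u@v" "u \<in> star_lang LB" "v \<in> R"
      by (auto simp: conc_iff)
    then show ?thesis using star_lang.star_app[of "[p]" LB u]
      by (auto simp: conc_iff) (metis append_Cons append_Nil)
  qed
qed

lemma det_main:
  assumes LB: "\<forall>w\<in>LB. \<exists>p. w = [p] \<and> fst p \<in> Bl"
    and fn: "\<forall>b i j. [(b,i)]\<in>LB \<longrightarrow> [(b,j)]\<in>LB \<longrightarrow> i=j"
    and LR1: "\<forall>p x. p#x \<in> R \<longrightarrow> fst p \<notin> Bl"
    and LR2: "\<forall>a i j x y. (a,i)#x \<in> R \<longrightarrow> (a,j)#y \<in> R \<longrightarrow> i = j \<and> (\<exists>L'. detL L' \<and> x\<in>L' \<and> y\<in>L')"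
  shows "detL (conc (star_lang LB) R)"
proof -
  let ?L = "conc (star_lang LB) R"
  have LB': "\<forall>w\<in>LB. \<exists>p. w = [p]" using LB by blast
  have "\<forall>v1 v2. w@(a,i)#v1 \<in> ?L \<longrightarrow> w@(a,j)#v2 \<in> ?L \<longrightarrow> i = j" for w a i j
  proof (induction w)
    case Nil
    show ?case
    proof (intro allI impI)
      fix v1 v2 assume h: "[] @ (a, i) # v1 \<in> ?L" "[] @ (a, j) # v2 \<in> ?L"
      from star_conc_cases[OF _ LB'] h(1) have c1: "(a,i)#v1 \<in> R \<or> [(a,i)] \<in> LB" by auto
      from star_conc_cases[OF _ LB'] h(2) have c2: "(a,j)#v2 \<in> R \<or> [(a,j)] \<in> LB" by auto
      show "i = j"
      proof (cases "a \<in> Bl")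
        case True
        with c1 c2 LR1 have "[(a,i)] \<in> LB" "[(a,j)] \<in> LB" by fastforce+
        with fn show ?thesis by blast
      next
        case False
        with c1 c2 LB have "(a,i)#v1 \<in> R" "(a,j)#v2 \<in> R" by fastforce+
        with LR2 show ?thesis by blast
      qed
    qed
  next
    case (Cons p w)
    show ?case
    proof (intro allI impI)
      fix v1 v2 assume h: "(p#w) @ (a, i) # v1 \<in> ?L" "(p#w) @ (a, j) # v2 \<in> ?L"
      from star_conc_cases[OF _ LB'] h(1) have c1: "p#(w@(a,i)#v1) \<in> R \<or> ([p] \<in> LB \<and> w@(a,i)#v1 \<in> ?L)" by auto
      from star_conc_cases[OF _ LB'] h(2) have c2: "p#(w@(a,j)#v2) \<in> R \<or> ([p] \<in> LB \<and> w@(a,j)#v2 \<in> ?L)" by auto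
      show "i = j"
      proof (cases "fst p \<in> Bl")
        case True
        with c1 c2 LR1 have "w@(a,i)#v1 \<in> ?L" "w@(a,j)#v2 \<in> ?L" by blast+
        with Cons.IH show ?thesis by blast
      next
        case False
        with c1 c2 LB have "p#(w@(a,i)#v1) \<in> R" "p#(w@(a,j)#v2) \<in> R" by fastforce+
        with LR2 obtain L' where "detL L'" "w@(a,i)#v1 \<in> L'" "w@(a,j)#v2 \<in> L'"
          by (cases p) blast
        then show ?thesis unfolding detL_def by (metis append_Cons append_Nil)
      qed
    qed
  qed
  then show ?thesis unfolding detL_def by (metis append_Cons append_Nil)
qed


definition step1 :: "('q, 'a) nfa \<Rightarrow> 'q set \<Rightarrow> 'a \<Rightarrow> 'q set" where
  "step1 A S a = (\<Union>q\<in>S. trans A q a)"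

lemma steps_Cons': "steps A S (a#w) = steps A (step1 A S a) w"
  by (simp add: step1_def)

definition loopset :: "('q, 'a) nfa \<Rightarrow> 'q set \<Rightarrow> 'a set" where
  "loopset A S = {a \<in> alph A. step1 A S a = S}"

definition exitset :: "('q, 'a) nfa \<Rightarrow> 'q set \<Rightarrow> 'a set" where
  "exitset A S = {a \<in> alph A. step1 A S a \<noteq> S}"

definition bsl :: "('q, 'a) nfa \<Rightarrow> 'q set \<Rightarrow> 'a list" where
  "bsl A S = (SOME xs. distinct xs \<and> set xs = loopset A S)"

definition asl :: "('q, 'a) nfa \<Rightarrow> 'q set \<Rightarrow> 'a list" where
  "asl A S = (SOME xs. distinct xs \<and> set xs = exitset A S)"

lemma bsl: "finite (alph A) \<Longrightarrow> distinct (bsl A S) \<and> set (bsl A S) = loopset A S"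
proof -
  assume "finite (alph A)"
  then have "finite (loopset A S)" by (simp add: loopset_def)
  from finite_distinct_list[OF this] obtain xs where xs: "set xs = loopset A S" "distinct xs" by blast
  show ?thesis unfolding bsl_def by (rule someI[where x=xs]) (use xs in auto)
qed

lemma asl: "finite (alph A) \<Longrightarrow> distinct (asl A S) \<and> set (asl A S) = exitset A S"
proof -
  assume "finite (alph A)"
  then have "finite (exitset A S)" by (simp add: exitset_def)
  from finite_distinct_list[OF this] obtain xs where xs: "set xs = exitset A S" "distinct xs" by blast
  show ?thesis unfolding asl_def by (rule someI[where x=xs]) (use xs in auto)
qed

primrec E :: "('q, 'a) nfa \<Rightarrow> nat \<Rightarrow> 'q set \<Rightarrow> 'a rexp" where
  "E A 0 S = Zero"
| "E A (Suc n) S = Times (Star (plus_list (map Atom (bsl A S))))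
     (Plus (if S \<inter> final A \<noteq> {} then One else Zero)
       (plus_list (map (\<lambda>a. Times (Atom a) (E A n (step1 A S a))) (asl A S))))"

lemma det_E: "finite (alph A) \<Longrightarrow> detL (lang (fst (mark_aux c (E A n S))))"
proof (induction n arbitrary: S c)
  case 0
  then show ?case by (simp add: detL_def)
next
  case (Suc n)
  let ?B = "plus_list (map Atom (bsl A S))"
  let ?F = "if S \<inter> final A \<noteq> {} then One else Zero :: 'a rexp"
  let ?g = "\<lambda>a. E A n (step1 A S a)"
  let ?Al = "plus_list (map (\<lambda>a. Times (Atom a) (?g a)) (asl A S))"
  define c1 where "c1 = snd (mark_aux c (Star ?B))"
  define c2 where "c2 = snd (mark_aux c1 ?F)"
  define LB where "LB = lang (fst (mark_aux c ?B))"
  define LF where "LF = lang (fst (mark_aux c1 ?F))"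
  define LA where "LA = lang (fst (mark_aux c2 ?Al))"
  have eq: "lang (fst (mark_aux c (E A (Suc n) S))) = conc (star_lang LB) (LF \<union> LA)"
    by (simp add: LB_def LF_def LA_def c1_def c2_def)
  have dB: "distinct (bsl A S)" "set (bsl A S) = loopset A S" using bsl[OF Suc.prems] by auto
  have dA: "distinct (asl A S)" "set (asl A S) = exitset A S" using asl[OF Suc.prems] by auto
  have LF: "LF \<subseteq> {[]}" unfolding LF_def by auto
  show ?case unfolding eq
  proof (rule det_main[where Bl = "loopset A S"])
    show "\<forall>w\<in>LB. \<exists>p. w = [p] \<and> fst p \<in> loopset A S"
      using atoms_single dB unfolding LB_def by metis
    show "\<forall>b i j. [(b, i)] \<in> LB \<longrightarrow> [(b, j)] \<in> LB \<longrightarrow> i = j"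
      using funct_atoms dB unfolding LB_def by metis
    show "\<forall>p x. p # x \<in> LF \<union> LA \<longrightarrow> fst p \<notin> loopset A S"
    proof (intro allI impI)
      fix p x assume "p # x \<in> LF \<union> LA"
      with LF have "p # x \<in> LA" by auto
      from alt_first[OF this[unfolded LA_def]] dA show "fst p \<notin> loopset A S"
        by (auto simp: loopset_def exitset_def)
    qed
    show "\<forall>a i j x y. (a, i) # x \<in> LF \<union> LA \<longrightarrow> (a, j) # y \<in> LF \<union> LA \<longrightarrow>
        i = j \<and> (\<exists>L'. detL L' \<and> x \<in> L' \<and> y \<in> L')"
    proof (intro allI impI)
      fix a i j x y assume h: "(a, i) # x \<in> LF \<union> LA" "(a, j) # y \<in> LF \<union> LA"
      with LF have "(a, i) # x \<in> LA" "(a, j) # y \<in> LA" by auto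
      then show "i = j \<and> (\<exists>L'. detL L' \<and> x \<in> L' \<and> y \<in> L')"
        using alt_prop[OF dA(1), of ?g] Suc.IH[OF Suc.prems] unfolding LA_def by blast
    qed
  qed
qed

lemma lang_lists_atoms: "w \<in> lang r \<Longrightarrow> w \<in> lists (atoms r)"
proof (induction r arbitrary: w)
  case (Star r)
  have "u \<in> star_lang (lang r) \<Longrightarrow> u \<in> lists (atoms r)" for u
    by (induction rule: star_lang.induct) (auto dest: Star.IH)
  with Star.prems show ?case by simp
next
  case (Times r s)
  then obtain u v where "w = u@v" "u \<in> lang r" "v \<in> lang s" by (auto simp: conc_iff)
  with Times.IH show ?case by auto
qed auto

lemma atoms_E: "finite (alph A) \<Longrightarrow> atoms (E A n S) \<subseteq> alph A"
proof (induction n arbitrary: S)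
  case (Suc n)
  then show ?case using bsl[OF Suc.prems, of S] asl[OF Suc.prems, of S]
    by (auto simp: atoms_plus_list loopset_def exitset_def)
qed simp

fun cnt :: "('q, 'a) nfa \<Rightarrow> 'q set \<Rightarrow> 'a list \<Rightarrow> nat" where
  "cnt A S [] = 0"
| "cnt A S (a#w) = (if step1 A S a = S then 0 else 1) + cnt A (step1 A S a) w"

lemma lang_E: "finite (alph A) \<Longrightarrow> w \<in> lists (alph A) \<Longrightarrow>
  (w \<in> lang (E A n S) \<longleftrightarrow> steps A S w \<inter> final A \<noteq> {} \<and> cnt A S w < n)"
proof (induction n arbitrary: S w)
  case 0
  then show ?case by simp
next
  case (Suc n)
  let ?LB = "(\<Union>b\<in>loopset A S. {[b]})"
  let ?R = "(if S \<inter> final A \<noteq> {} then {[]} else {}) \<union>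
     (\<Union>a\<in>exitset A S. conc {[a]} (lang (E A n (step1 A S a))))"
  have eq: "lang (E A (Suc n) S) = conc (star_lang ?LB) ?R"
    using bsl[OF Suc.prems(1), of S] asl[OF Suc.prems(1), of S]
    by (auto simp: lang_plus_list)
  have LB: "\<forall>w\<in>?LB. \<exists>p. w = [p]" by auto
  from Suc.prems(2) show ?case unfolding eq
  proof (induction w)
    case Nil
    then show ?case using star_conc_iff[OF LB, of "[]" ?R] by (auto simp: conc_iff)
  next
    case (Cons a w)
    then have a: "a \<in> alph A" and w: "w \<in> lists (alph A)" by auto
    show ?case
    proof (cases "step1 A S a = S")
      case True
      then have "a#w \<notin> ?R" by (auto simp: conc_iff exitset_def)
      moreover have "a \<in> loopset A S" using True a by (simp add: loopset_def)
      ultimately have "a#w \<in> conc (star_lang ?LB) ?R \<longleftrightarrow> w \<in> conc (star_lang ?LB) ?R"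
        using star_conc_iff[OF LB, of "a#w" ?R] by auto
      with Cons.IH True show ?thesis by (simp add: steps_Cons' del: steps.simps)
    next
      case False
      then have "a \<notin> loopset A S" by (simp add: loopset_def)
      then have "a#w \<in> conc (star_lang ?LB) ?R \<longleftrightarrow> a#w \<in> ?R"
        using star_conc_iff[OF LB, of "a#w" ?R] by auto
      also have "\<dots> \<longleftrightarrow> w \<in> lang (E A n (step1 A S a))"
        using False a by (auto simp: conc_iff exitset_def)
      also have "\<dots> \<longleftrightarrow> steps A (step1 A S a) w \<inter> final A \<noteq> {} \<and> cnt A (step1 A S a) w < n"
        using Suc.IH[OF Suc.prems(1) w] .
      finally show ?thesis using False by (simp add: steps_Cons' del: steps.simps)
    qed
  qed
qed


definition up :: "('q, 'a) nfa \<Rightarrow> 'q \<Rightarrow> 'q set" where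
  "up A q = {p \<in> states A. p \<noteq> q \<and> reach A q p}"

definition phi :: "('q, 'a) nfa \<Rightarrow> 'q \<Rightarrow> nat" where
  "phi A q = (card (states A) + 1) ^ card (up A q)"

definition pot :: "('q, 'a) nfa \<Rightarrow> 'q set \<Rightarrow> nat" where
  "pot A S = sum (phi A) S"

lemma P1:
  assumes "rpoNFA A" "q \<in> states A" "a \<in> alph A" "trans A q a \<noteq> {q}"
  shows "trans A q a \<subseteq> up A q"
proof
  fix p assume p: "p \<in> trans A q a"
  have nfa: "is_nfa A" using assms(1) by (simp add: rpoNFA_def poNFA_def)
  then have "p \<in> states A" using p assms(2,3) unfolding is_nfa_def by blast
  moreover have "p \<noteq> q"
  proof
    assume "p = q"
    with p have "q \<in> trans A q a" by simp
    with assms have "trans A q a = {q}" unfolding rpoNFA_def by blast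
    with assms(4) show False by simp
  qed
  moreover have "reach A q p" unfolding reach_def using p assms(3)
    by (intro bexI[of _ "[a]"]) auto
  ultimately show "p \<in> up A q" by (simp add: up_def)
qed

lemma P2:
  assumes "rpoNFA A" "q \<in> states A" "p \<in> up A q"
  shows "card (up A p) < card (up A q)"
proof -
  have po: "poNFA A" using assms(1) by (simp add: rpoNFA_def)
  have fin: "finite (states A)" using po by (simp add: poNFA_def is_nfa_def)
  have p: "p \<in> states A" "p \<noteq> q" "reach A q p" using assms(3) by (auto simp: up_def)
  have "up A p \<subseteq> up A q"
  proof
    fix r assume r: "r \<in> up A p"
    then have r': "r \<in> states A" "r \<noteq> p" "reach A p r" by (auto simp: up_def)
    have "reach A q r" using po p r' assms(2) unfolding poNFA_def by blast
    moreover have "r \<noteq> q"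
    proof
      assume "r = q"
      with r' have "reach A p q" by simp
      with p po assms(2) show False unfolding poNFA_def by blast
    qed
    ultimately show "r \<in> up A q" using r' by (simp add: up_def)
  qed
  moreover have "p \<notin> up A p" by (simp add: up_def)
  ultimately have "up A p \<subset> up A q" using assms(3) by blast
  moreover have "finite (up A q)" using fin by (simp add: up_def)
  ultimately show ?thesis by (rule psubset_card_mono[rotated])
qed

lemma P3:
  assumes "rpoNFA A" "q \<in> states A"
  shows "sum (phi A) (up A q) < phi A q"
proof -
  have po: "poNFA A" using assms(1) by (simp add: rpoNFA_def)
  have fin: "finite (states A)" using po by (simp add: poNFA_def is_nfa_def)
  define N where "N = card (states A)"
  define d where "d = card (up A q)"
  show ?thesis
  proof (cases "d = 0")
    case True
    have "finite (up A q)" using fin by (simp add: up_def)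
    with True have "up A q = {}" by (simp add: d_def)
    then show ?thesis by (simp add: phi_def)
  next
    case False
    have "d \<le> N" unfolding d_def N_def using fin by (intro card_mono) (auto simp: up_def)
    have bnd: "\<forall>p\<in>up A q. phi A p \<le> (N+1)^(d-1)"
    proof
      fix p assume "p \<in> up A q"
      from P2[OF assms this] have "card (up A p) \<le> d - 1" by (simp add: d_def)
      then show "phi A p \<le> (N+1)^(d-1)" unfolding phi_def N_def
        by (intro power_increasing) auto
    qed
    have "sum (phi A) (up A q) \<le> card (up A q) * (N+1)^(d-1)"
      using sum_bounded_above[of "up A q" "phi A" "(N+1)^(d-1)"] bnd by simp
    also have "\<dots> = d * (N+1)^(d-1)" by (simp add: d_def)
    also have "\<dots> < (N+1) * (N+1)^(d-1)"
      using \<open>d \<le> N\<close> by (intro mult_strict_right_mono) auto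
    also have "\<dots> = (N+1)^d" using False by (cases d) auto
    finally show ?thesis by (simp add: phi_def N_def d_def)
  qed
qed

lemma sum_UN_le_nat:
  fixes f :: "'b \<Rightarrow> nat"
  assumes "finite I" "\<forall>i\<in>I. finite (B i)"
  shows "sum f (\<Union>i\<in>I. B i) \<le> (\<Sum>i\<in>I. sum f (B i))"
  using assms
proof (induction I rule: finite_induct)
  case (insert x F)
  have "sum f (\<Union>i\<in>insert x F. B i) = sum f (B x \<union> (\<Union>i\<in>F. B i))" by simp
  also have "\<dots> \<le> sum f (B x) + sum f (\<Union>i\<in>F. B i)"
    using sum_Un_nat[of "B x" "\<Union>i\<in>F. B i" f] insert by auto
  also have "\<dots> \<le> sum f (B x) + (\<Sum>i\<in>F. sum f (B i))" using insert by simp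
  finally show ?case using insert by simp
qed simp

lemma pot_decrease:
  assumes "rpoNFA A" "S \<subseteq> states A" "a \<in> alph A" "step1 A S a \<noteq> S"
  shows "pot A (step1 A S a) < pot A S"
proof -
  have po: "poNFA A" using assms(1) by (simp add: rpoNFA_def)
  have nfa: "is_nfa A" using po by (simp add: poNFA_def)
  have fin: "finite (states A)" using nfa by (simp add: is_nfa_def)
  have finS: "finite S" using fin assms(2) finite_subset by blast
  define X where "X = {q\<in>S. trans A q a \<noteq> {q}}"
  have finX: "finite X" using finS by (simp add: X_def)
  have eq: "step1 A S a = (S - X) \<union> (\<Union>x\<in>X. trans A x a)"
    unfolding step1_def X_def by auto
  have "X \<noteq> {}"
  proof
    assume "X = {}"
    with eq assms(4) show False by simp
  qed
  have fintr: "\<forall>x\<in>X. finite (trans A x a)"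
  proof
    fix x assume "x \<in> X"
    then have "x \<in> states A" using assms(2) by (auto simp: X_def)
    then have "trans A x a \<subseteq> states A" using nfa assms(3) unfolding is_nfa_def by blast
    then show "finite (trans A x a)" using fin finite_subset by blast
  qed
  have finU: "finite (\<Union>x\<in>X. trans A x a)" using finX fintr by blast
  have s1: "pot A (step1 A S a) \<le> sum (phi A) (S - X) + sum (phi A) (\<Union>x\<in>X. trans A x a)"
    unfolding eq pot_def using sum_Un_nat[of "S - X" "\<Union>x\<in>X. trans A x a" "phi A"] finS finU
    by simp
  have s2: "sum (phi A) (\<Union>x\<in>X. trans A x a) \<le> (\<Sum>x\<in>X. sum (phi A) (trans A x a))"
    by (rule sum_UN_le_nat[OF finX fintr])
  have s3: "(\<Sum>x\<in>X. sum (phi A) (trans A x a)) \<le> (\<Sum>x\<in>X. sum (phi A) (up A x))"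
  proof (rule sum_mono)
    fix x assume x: "x \<in> X"
    then have "x \<in> states A" "trans A x a \<noteq> {x}" using assms(2) by (auto simp: X_def)
    from P1[OF assms(1) this(1) assms(3) this(2)] have "trans A x a \<subseteq> up A x" .
    moreover have "finite (up A x)" using fin by (simp add: up_def)
    ultimately show "sum (phi A) (trans A x a) \<le> sum (phi A) (up A x)"
      by (intro sum_mono2) auto
  qed
  have s4: "(\<Sum>x\<in>X. sum (phi A) (up A x)) < sum (phi A) X"
    using finX \<open>X \<noteq> {}\<close>
  proof (rule sum_strict_mono)
    fix x assume "x \<in> X"
    then have "x \<in> states A" using assms(2) by (auto simp: X_def)
    from P3[OF assms(1) this] show "sum (phi A) (up A x) < phi A x" .
  qed
  have s5: "pot A S = sum (phi A) (S - X) + sum (phi A) X"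
    unfolding pot_def by (rule sum.subset_diff) (auto simp: X_def finS)
  from s1 s2 s3 s4 s5 show ?thesis by linarith
qed

lemma cnt_bound:
  assumes "rpoNFA A"
  shows "S \<subseteq> states A \<Longrightarrow> w \<in> lists (alph A) \<Longrightarrow> cnt A S w \<le> pot A S"
proof (induction w arbitrary: S)
  case Nil
  then show ?case by simp
next
  case (Cons a w)
  have nfa: "is_nfa A" using assms by (simp add: rpoNFA_def poNFA_def)
  have a: "a \<in> alph A" and w: "w \<in> lists (alph A)" using Cons.prems by auto
  have sub: "step1 A S a \<subseteq> states A"
    using nfa Cons.prems(1) a unfolding is_nfa_def step1_def by blast
  have IH: "cnt A (step1 A S a) w \<le> pot A (step1 A S a)" using Cons.IH[OF sub w] .
  show ?case
  proof (cases "step1 A S a = S")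
    case True
    with IH show ?thesis by simp
  next
    case False
    with pot_decrease[OF assms Cons.prems(1) a False] IH show ?thesis by simp
  qed
qed

theorem theorem12:
  fixes A :: "('q, 'a) nfa"
  assumes "rpoNFA A"
  shows "DRE_definable (alph A) (nfa_lang A)"
proof -
  have nfa: "is_nfa A" using assms by (simp add: rpoNFA_def poNFA_def)
  have fin: "finite (alph A)" using nfa by (simp add: is_nfa_def)
  have initS: "init A \<subseteq> states A" using nfa by (simp add: is_nfa_def)
  define r where "r = E A (Suc (pot A (init A))) (init A)"
  have "atoms r \<subseteq> alph A" unfolding r_def by (rule atoms_E[OF fin])
  moreover have "deterministic r"
    unfolding r_def deterministic_def detL_def[symmetric] mark_def by (rule det_E[OF fin])
  moreover have "lang r = nfa_lang A"
  proof
    show "lang r \<subseteq> nfa_lang A"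
    proof
      fix w assume w: "w \<in> lang r"
      have wl: "w \<in> lists (alph A)" using lang_lists_atoms[OF w] \<open>atoms r \<subseteq> alph A\<close> by auto
      have "w \<in> lang r \<longleftrightarrow> steps A (init A) w \<inter> final A \<noteq> {} \<and> cnt A (init A) w < Suc (pot A (init A))"
        unfolding r_def by (rule lang_E[OF fin wl])
      with w wl show "w \<in> nfa_lang A" unfolding nfa_lang_def by blast
    qed
  next
    show "nfa_lang A \<subseteq> lang r"
    proof
      fix w assume w: "w \<in> nfa_lang A"
      then have wl: "w \<in> lists (alph A)" and acc: "steps A (init A) w \<inter> final A \<noteq> {}"
        by (auto simp: nfa_lang_def)
      have "cnt A (init A) w < Suc (pot A (init A))"
        using cnt_bound[OF assms initS wl] by simp
      moreover have "w \<in> lang r \<longleftrightarrow> steps A (init A) w \<inter> final A \<noteq> {} \<and> cnt A (init A) w < Suc (pot A (init A))"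
        unfolding r_def by (rule lang_E[OF fin wl])
      ultimately show "w \<in> lang r" using acc by blast
    qed
  qed
  ultimately show ?thesis unfolding DRE_definable_def by blast
qed

end
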